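(* For any $1\le p\le\infty$, $k\ge0$, and pmm-spaces $X,Y,Z$, \[ \mathsf{mPGW}^k_p(X,Z)\le\mathsf{mPGW}^k_p(X,Y)+\mathsf{mPGW}^k_p(Y,Z). \]
   Context: A pmm-space is a triple $(X,d_X,\mu_X)$ with $(X,d_X)$ a complete separable metric space and $\mu_X$ a Borel probability measure. For a nonnegative Borel measure $\pi$ on $X\times Y$, $\pi_X,\pi_Y$ are its marginals, $|\pi|$ its total mass, and for $p<\infty$, $\|d_X-d_Y\|_{L^p(\pi\otimes\pi)}=\left(\iint|d_X(x,x')-d_Y(y,y')|^p\,d\pi(x,y)\,d\pi(x',y')\right)^{1/p}$; for $p=\infty$ the $\pi\otimes\pi$-essential supremum. For $0\le\delta\le1$: $\mathsf{mPGW}_{\delta,p}(X,Y)=\inf\{\|d_X-d_Y\|_{L^p(\tilde\pi\otimes\tilde\pi)}:\tilde\pi$ nonnegative Borel measure on $X\times Y$, $\tilde\pi_X\le\mu_X$, $\tilde\pi_Y\le\mu_Y$ setwise, $|\tilde\pi|=\delta\}$. For $k\ge0$: $\mathsf{mPGW}^k_p(X,Y)=\inf\{\delta\in[0,1]:\mathsf{mPGW}_{1-\delta,p}(X,Y)\le k\delta\}$. *)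

theory Defs
  imports "HOL-Analysis.Analysis" "HOL-Probability.Probability"
begin

text \<open>A pmm-space: the complete separable metric space is the type (class polish_space,
  metric = dist), and the Borel probability measure is given by the measure mu.\<close>
definition pmm_space :: "'a::polish_space measure \<Rightarrow> bool" where
  "pmm_space \<mu> \<longleftrightarrow> prob_space \<mu> \<and> sets \<mu> = sets (borel :: 'a measure)"

definition partial_couplings ::
  "'a::polish_space measure \<Rightarrow> 'b::polish_space measure \<Rightarrow> real \<Rightarrow> ('a \<times> 'b) measure set" where
  "partial_couplings \<mu> \<nu> \<delta> = {\<pi>.
     sets \<pi> = sets (borel :: ('a \<times> 'b) measure) \<and>
     (\<forall>A \<in> sets (borel :: 'a measure). emeasure (distr \<pi> borel fst) A \<le> emeasure \<mu> A) \<and>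
     (\<forall>B \<in> sets (borel :: 'b measure). emeasure (distr \<pi> borel snd) B \<le> emeasure \<nu> B) \<and>
     emeasure \<pi> (space \<pi>) = ennreal \<delta>}"

definition distortion :: "('a::metric_space \<times> 'b::metric_space) \<Rightarrow> ('a \<times> 'b) \<Rightarrow> real" where
  "distortion z z' = \<bar>dist (fst z) (fst z') - dist (snd z) (snd z')\<bar>"

definition Lp_distortion ::
  "ennreal \<Rightarrow> ('a::metric_space \<times> 'b::metric_space) measure \<Rightarrow> ennreal" where
  "Lp_distortion p \<pi> =
     (if p = \<infinity> then esssup (\<pi> \<Otimes>\<^sub>M \<pi>) (\<lambda>(z, z'). ennreal (distortion z z'))
      else (let I = (\<integral>\<^sup>+ z. (\<integral>\<^sup>+ z'. ennreal (distortion z z' powr enn2real p) \<partial>\<pi>) \<partial>\<pi>)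
            in if I = \<infinity> then \<infinity> else ennreal (enn2real I powr (1 / enn2real p))))"

definition mPGW ::
  "real \<Rightarrow> ennreal \<Rightarrow> 'a::polish_space measure \<Rightarrow> 'b::polish_space measure \<Rightarrow> ennreal" where
  "mPGW \<delta> p \<mu> \<nu> = (INF \<pi> \<in> partial_couplings \<mu> \<nu> \<delta>. Lp_distortion p \<pi>)"

definition mPGWk ::
  "real \<Rightarrow> ennreal \<Rightarrow> 'a::polish_space measure \<Rightarrow> 'b::polish_space measure \<Rightarrow> real" where
  "mPGWk k p \<mu> \<nu> = Inf {\<delta> \<in> {0..1}. mPGW (1 - \<delta>) p \<mu> \<nu> \<le> ennreal (k * \<delta>)}"

end

theory Submission
  imports Defs
begin


definition NP :: "real \<Rightarrow> ennreal \<Rightarrow> ennreal" where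
  "NP q I = (if I = \<infinity> then \<infinity> else ennreal (enn2real I powr (1/q)))"

lemma convex_powr_ineq:
  fixes x y l q :: real
  assumes q: "q \<ge> 1" and x: "x \<ge> 0" and y: "y \<ge> 0" and l: "0 \<le> l" "l \<le> 1"
  shows "(l*x + (1-l)*y) powr q \<le> l * x powr q + (1-l) * y powr q"
proof (cases "x > 0 \<and> y > 0")
  case True
  then show ?thesis using convex_onD[OF powr_convex[OF q], of "1-l" x y] l by auto
next
  case False
  have lq: "t powr q \<le> t" if "0 \<le> t" "t \<le> 1" for t :: real
  proof (cases "t = 0")
    case False
    then have "t powr q \<le> t powr 1" using that q by (intro powr_mono') auto
    then show ?thesis using that by simp
  qed simp
  show ?thesis
  proof (cases "x = 0")
    case True
    have "((1-l)*y) powr q = (1-l) powr q * y powr q" using l y by (simp add: powr_mult)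
    also have "\<dots> \<le> (1-l) * y powr q" using lq[of "1-l"] l by (intro mult_right_mono) auto
    finally show ?thesis using True q by simp
  next
    case False
    then have "y = 0" using \<open>\<not> (x > 0 \<and> y > 0)\<close> x y by auto
    have "(l*x) powr q = l powr q * x powr q" using l x by (simp add: powr_mult)
    also have "\<dots> \<le> l * x powr q" using lq[of l] l by (intro mult_right_mono) auto
    finally show ?thesis using \<open>y = 0\<close> q by simp
  qed
qed

lemma minkowski_pointwise:
  fixes f g a b q :: real
  assumes q: "q \<ge> 1" and f: "f \<ge> 0" and g: "g \<ge> 0" and a: "a > 0" and b: "b > 0"
  shows "(f + g) powr q \<le> (a+b) powr q * (a/(a+b)) / a powr q * f powr q
            + (a+b) powr q * (b/(a+b)) / b powr q * g powr q"
proof -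
  define l where "l = a/(a+b)"
  have l1: "1 - l = b/(a+b)" using a b by (simp add: l_def field_simps)
  have e1: "l*(f/a) = f/(a+b)" using a b by (simp add: l_def)
  have e2: "(1-l)*(g/b) = g/(a+b)" using a b by (simp add: l1)
  have eq: "(f+g)/(a+b) = l*(f/a) + (1-l)*(g/b)" unfolding e1 e2 by (simp add: add_divide_distrib)
  have "(f+g) powr q = (a+b) powr q * ((f+g)/(a+b)) powr q" using a b f g by (simp add: powr_divide)
  also have "\<dots> \<le> (a+b) powr q * (l * (f/a) powr q + (1-l) * (g/b) powr q)"
    unfolding eq using a b f g q
    by (intro mult_left_mono convex_powr_ineq) (auto simp: l_def)
  also have "\<dots> = (a+b) powr q * (a/(a+b)) / a powr q * f powr q
            + (a+b) powr q * (b/(a+b)) / b powr q * g powr q"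
    using a b f g by (simp add: l1 l_def powr_divide field_simps)
  finally show ?thesis .
qed

lemma NP_mono: "I \<le> J \<Longrightarrow> q > 0 \<Longrightarrow> NP q I \<le> NP q J"
proof (cases "J = \<infinity>")
  case False
  assume IJ: "I \<le> J" and q: "q > 0"
  then have "I \<noteq> \<infinity>" using False by (metis infinity_ennreal_def top.extremum_uniqueI)
  then show ?thesis unfolding NP_def using False IJ q
    by (auto intro!: ennreal_leI powr_mono2 enn2real_mono simp: less_top)
qed (simp add: NP_def)

lemma NP_powr: "q > 0 \<Longrightarrow> c \<ge> 0 \<Longrightarrow> NP q (ennreal (c powr q)) = ennreal c"
  unfolding NP_def by (simp add: powr_powr)

lemma minkowski:
  fixes f g :: "'x \<Rightarrow> real" and q :: real
  assumes q: "q \<ge> 1" and fm: "f \<in> borel_measurable M" and gm: "g \<in> borel_measurable M"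
    and f0: "\<And>x. f x \<ge> 0" and g0: "\<And>x. g x \<ge> 0"
  shows "NP q (\<integral>\<^sup>+x. ennreal ((f x + g x) powr q) \<partial>M)
     \<le> NP q (\<integral>\<^sup>+x. ennreal (f x powr q) \<partial>M) + NP q (\<integral>\<^sup>+x. ennreal (g x powr q) \<partial>M)"
proof -
  define F where "F = (\<integral>\<^sup>+x. ennreal (f x powr q) \<partial>M)"
  define G where "G = (\<integral>\<^sup>+x. ennreal (g x powr q) \<partial>M)"
  define I where "I = (\<integral>\<^sup>+x. ennreal ((f x + g x) powr q) \<partial>M)"
  show ?thesis
  proof (cases "F = \<infinity> \<or> G = \<infinity>")
    case True
    then show ?thesis unfolding F_def[symmetric] G_def[symmetric] by (auto simp: NP_def)
  next
    case False
    obtain F' where FF: "F = ennreal F'" "F' \<ge> 0" using False by (cases F rule: ennreal_cases) auto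
    obtain G' where GG: "G = ennreal G'" "G' \<ge> 0" using False by (cases G rule: ennreal_cases) auto
    define A where "A = F' powr (1/q)"
    define B where "B = G' powr (1/q)"
    have A0: "A \<ge> 0" "B \<ge> 0" by (auto simp: A_def B_def)
    have NPF: "NP q F = ennreal A" using FF by (simp add: NP_def A_def)
    have NPG: "NP q G = ennreal B" using GG by (simp add: NP_def B_def)
    have claim: "NP q I \<le> ennreal (a + b)" if a: "a > A" and b: "b > B" for a b
    proof -
      have a0: "a > 0" and b0: "b > 0" using a b A0 by auto
      have Fa: "F' \<le> a powr q"
      proof -
        have "F' = A powr q" using FF q by (simp add: A_def powr_powr)
        also have "\<dots> \<le> a powr q" using a A0 q by (intro powr_mono2) auto
        finally show ?thesis .
      qed
      have Gb: "G' \<le> b powr q"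
      proof -
        have "G' = B powr q" using GG q by (simp add: B_def powr_powr)
        also have "\<dots> \<le> b powr q" using b A0 q by (intro powr_mono2) auto
        finally show ?thesis .
      qed
      define c1 where "c1 = (a+b) powr q * (a/(a+b)) / a powr q"
      define c2 where "c2 = (a+b) powr q * (b/(a+b)) / b powr q"
      have c0: "c1 \<ge> 0" "c2 \<ge> 0" using a0 b0 by (auto simp: c1_def c2_def)
      have pw: "ennreal ((f x + g x) powr q) \<le> ennreal (c1 * f x powr q) + ennreal (c2 * g x powr q)" for x
      proof -
        have "(f x + g x) powr q \<le> c1 * f x powr q + c2 * g x powr q"
          unfolding c1_def c2_def by (rule minkowski_pointwise[OF q f0 g0 a0 b0])
        then have "ennreal ((f x + g x) powr q) \<le> ennreal (c1 * f x powr q + c2 * g x powr q)"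
          by (rule ennreal_leI)
        also have "\<dots> = ennreal (c1 * f x powr q) + ennreal (c2 * g x powr q)"
          by (rule ennreal_plus) (use c0 in auto)
        finally show ?thesis .
      qed
      have "I \<le> (\<integral>\<^sup>+x. ennreal (c1 * f x powr q) + ennreal (c2 * g x powr q) \<partial>M)"
        unfolding I_def by (intro nn_integral_mono pw)
      also have "\<dots> = ennreal c1 * F + ennreal c2 * G"
        unfolding F_def G_def using fm gm c0
        by (subst nn_integral_add) (auto simp: ennreal_mult nn_integral_cmult)
      also have "\<dots> = ennreal (c1 * F' + c2 * G')"
        unfolding FF GG using c0 FF GG by (simp add: ennreal_mult ennreal_plus)
      also have "\<dots> \<le> ennreal (c1 * a powr q + c2 * b powr q)"
        using c0 Fa Gb by (intro ennreal_leI add_mono mult_left_mono)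
      also have "c1 * a powr q + c2 * b powr q = (a+b) powr q"
      proof -
        have "c1 * a powr q = (a+b) powr q * (a/(a+b))" using a0 by (simp add: c1_def)
        moreover have "c2 * b powr q = (a+b) powr q * (b/(a+b))" using b0 by (simp add: c2_def)
        moreover have "a/(a+b) + b/(a+b) = 1" using a0 b0 by (simp add: add_divide_distrib[symmetric])
        ultimately show ?thesis by (metis distrib_left mult.right_neutral)
      qed
      finally have Ile: "I \<le> ennreal ((a+b) powr q)" .
      then have "I \<noteq> \<infinity>" by (metis ennreal_neq_top infinity_ennreal_def top.extremum_uniqueI)
      then have "NP q I = ennreal (enn2real I powr (1/q))" by (simp add: NP_def)
      also have "\<dots> \<le> ennreal (((a+b) powr q) powr (1/q))"
        using Ile q by (intro ennreal_leI powr_mono2) (auto simp: enn2real_leI)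
      also have "\<dots> = ennreal (a+b)" using q a0 b0 by (simp add: powr_powr)
      finally show ?thesis .
    qed
    have "NP q I \<le> ennreal A + ennreal B"
    proof (rule ennreal_le_epsilon)
      fix e :: real assume e: "0 < e"
      have "NP q I \<le> ennreal ((A + e/2) + (B + e/2))" using e by (intro claim) auto
      also have "\<dots> = ennreal A + ennreal B + ennreal e"
        using A0 e by (simp add: ennreal_plus[symmetric] del: ennreal_plus)
      finally show "NP q I \<le> ennreal A + ennreal B + ennreal e" .
    qed
    then show ?thesis unfolding I_def[symmetric] F_def[symmetric] G_def[symmetric] NPF NPG .
  qed
qed



lemma sets_borel_prod_eq: "sets (borel :: ('x::second_countable_topology \<times> 'y::second_countable_topology) measure) = sets (borel \<Otimes>\<^sub>M borel)"
  by (rule arg_cong[where f=sets], rule borel_prod[symmetric])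

locale glue =
  fixes \<pi>1 :: "('a::polish_space \<times> 'b::polish_space) measure"
    and \<pi>2 :: "('b \<times> 'c::polish_space) measure"
    and B :: "nat \<Rightarrow> 'b set"
    and c :: "nat \<Rightarrow> real"
  assumes s1: "sets \<pi>1 = sets borel" and s2: "sets \<pi>2 = sets borel"
    and fin1: "emeasure \<pi>1 (space \<pi>1) \<noteq> \<infinity>" and fin2: "emeasure \<pi>2 (space \<pi>2) \<noteq> \<infinity>"
    and Bm: "\<And>n. B n \<in> sets borel" and Bdisj: "disjoint_family B"
    and c0: "\<And>n. c n \<ge> 0"
    and c1: "\<And>n. c n * measure \<pi>2 (B n \<times> UNIV) \<le> 1"
    and c2: "\<And>n. c n * measure \<pi>1 (UNIV \<times> B n) \<le> 1"
begin

lemma sp1: "space \<pi>1 = UNIV" using sets_eq_imp_space_eq[OF s1] by simp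
lemma sp2: "space \<pi>2 = UNIV" using sets_eq_imp_space_eq[OF s2] by simp

lemma finite1: "finite_measure \<pi>1" using fin1 by (rule finite_measureI)
lemma finite2: "finite_measure \<pi>2" using fin2 by (rule finite_measureI)

sublocale P1: finite_measure \<pi>1 by (rule finite1)
sublocale P2: finite_measure \<pi>2 by (rule finite2)
sublocale P12: pair_sigma_finite \<pi>1 \<pi>2 ..

lemma UB1: "UNIV \<times> B n \<in> sets \<pi>1"
  unfolding s1 sets_borel_prod_eq using Bm by (intro pair_measureI) auto
lemma UB2: "B n \<times> UNIV \<in> sets \<pi>2"
  unfolding s2 sets_borel_prod_eq using Bm by (intro pair_measureI) auto

definition w :: "(('a \<times> 'b) \<times> ('b \<times> 'c)) \<Rightarrow> ennreal" where
  "w u = (\<Sum>n. ennreal (c n) * indicator (UNIV \<times> B n) (fst u) * indicator (B n \<times> UNIV) (snd u))"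

lemma w_meas[measurable]: "w \<in> borel_measurable (\<pi>1 \<Otimes>\<^sub>M \<pi>2)"
  unfolding w_def using UB1 UB2 by measurable

definition gt :: "(('a \<times> 'b) \<times> ('b \<times> 'c)) measure" where
  "gt = density (\<pi>1 \<Otimes>\<^sub>M \<pi>2) w"

lemma sets_gt: "sets gt = sets (\<pi>1 \<Otimes>\<^sub>M \<pi>2)" by (simp add: gt_def)
lemma space_gt: "space gt = UNIV" by (simp add: gt_def space_pair_measure sp1 sp2)

lemma inner1: "(\<integral>\<^sup>+v2. w (v, v2) \<partial>\<pi>2) \<le> 1"
proof -
  have "(\<integral>\<^sup>+v2. w (v, v2) \<partial>\<pi>2) = (\<Sum>n. \<integral>\<^sup>+v2. ennreal (c n) * indicator (UNIV \<times> B n) v * indicator (B n \<times> UNIV) v2 \<partial>\<pi>2)"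
    unfolding w_def using UB2 by (subst nn_integral_suminf) auto
  also have "\<dots> = (\<Sum>n. ennreal (c n) * indicator (UNIV \<times> B n) v * emeasure \<pi>2 (B n \<times> UNIV))"
    using UB2 by (subst nn_integral_cmult) auto
  also have "\<dots> \<le> (\<Sum>n. indicator (B n) (snd v))"
  proof (intro suminf_le allI)
    fix n
    have "ennreal (c n) * emeasure \<pi>2 (B n \<times> UNIV) = ennreal (c n * measure \<pi>2 (B n \<times> UNIV))"
      by (simp add: P2.emeasure_eq_measure ennreal_mult c0)
    also have "\<dots> \<le> 1" using c1[of n] by (simp add: ennreal_le_1)
    finally show "ennreal (c n) * indicator (UNIV \<times> B n) v * emeasure \<pi>2 (B n \<times> UNIV) \<le> indicator (B n) (snd v)"
      by (cases v) (auto simp: indicator_def mult.commute)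
  qed auto
  also have "\<dots> = indicator (\<Union>n. B n) (snd v)" by (rule suminf_indicator[OF Bdisj])
  also have "\<dots> \<le> 1" by (simp add: indicator_def)
  finally show ?thesis .
qed

lemma inner2: "(\<integral>\<^sup>+v1. w (v1, v) \<partial>\<pi>1) \<le> 1"
proof -
  have "(\<integral>\<^sup>+v1. w (v1, v) \<partial>\<pi>1) = (\<Sum>n. \<integral>\<^sup>+v1. (ennreal (c n) * indicator (B n \<times> UNIV) v) * indicator (UNIV \<times> B n) v1 \<partial>\<pi>1)"
    unfolding w_def using UB1 by (subst nn_integral_suminf) (auto simp: mult_ac)
  also have "\<dots> = (\<Sum>n. ennreal (c n) * indicator (B n \<times> UNIV) v * emeasure \<pi>1 (UNIV \<times> B n))"
    using UB1 by (subst nn_integral_cmult) auto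
  also have "\<dots> \<le> (\<Sum>n. indicator (B n) (fst v))"
  proof (intro suminf_le allI)
    fix n
    have "ennreal (c n) * emeasure \<pi>1 (UNIV \<times> B n) = ennreal (c n * measure \<pi>1 (UNIV \<times> B n))"
      by (simp add: P1.emeasure_eq_measure ennreal_mult c0)
    also have "\<dots> \<le> 1" using c2[of n] by (simp add: ennreal_le_1)
    finally show "ennreal (c n) * indicator (B n \<times> UNIV) v * emeasure \<pi>1 (UNIV \<times> B n) \<le> indicator (B n) (fst v)"
      by (cases v) (auto simp: indicator_def mult.commute)
  qed auto
  also have "\<dots> = indicator (\<Union>n. B n) (fst v)" by (rule suminf_indicator[OF Bdisj])
  also have "\<dots> \<le> 1" by (simp add: indicator_def)
  finally show ?thesis .
qed

lemma TL1:
  assumes h[measurable]: "h \<in> borel_measurable \<pi>1"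
  shows "(\<integral>\<^sup>+u. h (fst u) \<partial>gt) \<le> integral\<^sup>N \<pi>1 h"
proof -
  have "(\<integral>\<^sup>+u. h (fst u) \<partial>gt) = (\<integral>\<^sup>+u. w u * h (fst u) \<partial>(\<pi>1 \<Otimes>\<^sub>M \<pi>2))"
    unfolding gt_def by (subst nn_integral_density) auto
  also have "\<dots> = (\<integral>\<^sup>+v. \<integral>\<^sup>+v2. w (v, v2) * h v \<partial>\<pi>2 \<partial>\<pi>1)"
    by (subst P2.nn_integral_fst[symmetric]) auto
  also have "\<dots> = (\<integral>\<^sup>+v. (\<integral>\<^sup>+v2. w (v, v2) \<partial>\<pi>2) * h v \<partial>\<pi>1)"
    by (intro nn_integral_cong nn_integral_multc) (auto simp: sp1)
  also have "\<dots> \<le> (\<integral>\<^sup>+v. 1 * h v \<partial>\<pi>1)"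
    by (intro nn_integral_mono mult_right_mono inner1) auto
  finally show ?thesis by simp
qed

lemma TL2:
  assumes h[measurable]: "h \<in> borel_measurable \<pi>2"
  shows "(\<integral>\<^sup>+u. h (snd u) \<partial>gt) \<le> integral\<^sup>N \<pi>2 h"
proof -
  have "(\<integral>\<^sup>+u. h (snd u) \<partial>gt) = (\<integral>\<^sup>+u. w u * h (snd u) \<partial>(\<pi>1 \<Otimes>\<^sub>M \<pi>2))"
    unfolding gt_def by (subst nn_integral_density) auto
  also have "\<dots> = (\<integral>\<^sup>+v. \<integral>\<^sup>+v1. w (v1, v) * h v \<partial>\<pi>1 \<partial>\<pi>2)"
    by (subst P12.nn_integral_snd[symmetric]) auto
  also have "\<dots> = (\<integral>\<^sup>+v. (\<integral>\<^sup>+v1. w (v1, v) \<partial>\<pi>1) * h v \<partial>\<pi>2)"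
    by (intro nn_integral_cong nn_integral_multc) (auto simp: sp2)
  also have "\<dots> \<le> (\<integral>\<^sup>+v. 1 * h v \<partial>\<pi>2)"
    by (intro nn_integral_mono mult_right_mono inner2) auto
  finally show ?thesis by simp
qed

lemma AE_cell: "AE u in gt. \<exists>n. snd (fst u) \<in> B n \<and> fst (snd u) \<in> B n"
  unfolding gt_def
proof (subst AE_density[OF w_meas], intro AE_I2 impI)
  fix u assume "0 < w u"
  then have "(\<Sum>n. ennreal (c n) * indicator (UNIV \<times> B n) (fst u) * indicator (B n \<times> UNIV) (snd u)) \<noteq> 0"
    unfolding w_def by auto
  then have "\<exists>n. ennreal (c n) * indicator (UNIV \<times> B n) (fst u) * indicator (B n \<times> UNIV) (snd u) \<noteq> 0"
  proof (rule contrapos_np)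
    assume "\<not> (\<exists>n. ennreal (c n) * indicator (UNIV \<times> B n) (fst u) * indicator (B n \<times> UNIV) (snd u) \<noteq> 0)"
    then have "(\<lambda>n. ennreal (c n) * indicator (UNIV \<times> B n) (fst u) * indicator (B n \<times> UNIV) (snd u)) = (\<lambda>n. 0)"
      by auto
    then show "(\<Sum>n. ennreal (c n) * indicator (UNIV \<times> B n) (fst u) * indicator (B n \<times> UNIV) (snd u)) = 0" by simp
  qed
  then obtain n where "ennreal (c n) * indicator (UNIV \<times> B n) (fst u) * indicator (B n \<times> UNIV) (snd u) \<noteq> 0"
    by blast
  then show "\<exists>n. snd (fst u) \<in> B n \<and> fst (snd u) \<in> B n"
    by (auto simp: indicator_def split: if_splits)
qed

lemma mass_gt: "emeasure gt (space gt) = (\<Sum>n. ennreal (c n) * emeasure \<pi>1 (UNIV \<times> B n) * emeasure \<pi>2 (B n \<times> UNIV))"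
proof -
  have "emeasure gt (space gt) = (\<integral>\<^sup>+u. w u \<partial>(\<pi>1 \<Otimes>\<^sub>M \<pi>2))"
  proof -
    have "emeasure gt (space gt) = (\<integral>\<^sup>+u. 1 \<partial>gt)" by simp
    also have "\<dots> = (\<integral>\<^sup>+u. w u * 1 \<partial>(\<pi>1 \<Otimes>\<^sub>M \<pi>2))"
      unfolding gt_def by (rule nn_integral_density) auto
    finally show ?thesis by simp
  qed
  also have "\<dots> = (\<Sum>n. \<integral>\<^sup>+u. ennreal (c n) * indicator (UNIV \<times> B n) (fst u) * indicator (B n \<times> UNIV) (snd u) \<partial>(\<pi>1 \<Otimes>\<^sub>M \<pi>2))"
    unfolding w_def using UB1 UB2 by (subst nn_integral_suminf) auto
  also have "\<dots> = (\<Sum>n. ennreal (c n) * emeasure \<pi>1 (UNIV \<times> B n) * emeasure \<pi>2 (B n \<times> UNIV))"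
  proof (rule suminf_cong)
    fix n
    have "(UNIV \<times> B n) \<times> (B n \<times> UNIV) \<in> sets (\<pi>1 \<Otimes>\<^sub>M \<pi>2)" using UB1 UB2 by auto
    have "(\<integral>\<^sup>+u. ennreal (c n) * indicator (UNIV \<times> B n) (fst u) * indicator (B n \<times> UNIV) (snd u) \<partial>(\<pi>1 \<Otimes>\<^sub>M \<pi>2))
       = (\<integral>\<^sup>+u. ennreal (c n) * indicator ((UNIV \<times> B n) \<times> (B n \<times> UNIV)) u \<partial>(\<pi>1 \<Otimes>\<^sub>M \<pi>2))"
      by (intro nn_integral_cong) (auto simp: indicator_def)
    also have "\<dots> = ennreal (c n) * emeasure (\<pi>1 \<Otimes>\<^sub>M \<pi>2) ((UNIV \<times> B n) \<times> (B n \<times> UNIV))"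
      using UB1 UB2 by (subst nn_integral_cmult_indicator) auto
    also have "\<dots> = ennreal (c n) * emeasure \<pi>1 (UNIV \<times> B n) * emeasure \<pi>2 (B n \<times> UNIV)"
      using UB1 UB2 by (simp add: P2.emeasure_pair_measure_Times mult.assoc)
    finally show "(\<integral>\<^sup>+u. ennreal (c n) * indicator (UNIV \<times> B n) (fst u) * indicator (B n \<times> UNIV) (snd u) \<partial>(\<pi>1 \<Otimes>\<^sub>M \<pi>2))
       = ennreal (c n) * emeasure \<pi>1 (UNIV \<times> B n) * emeasure \<pi>2 (B n \<times> UNIV)" .
  qed
  finally show ?thesis .
qed

end


lemma exists_partition:
  fixes r :: real
  assumes r: "r > 0"
  shows "\<exists>B :: nat \<Rightarrow> 'b::polish_space set. (\<forall>n. B n \<in> sets borel) \<and> disjoint_family B \<and>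
     (\<Union>n. B n) = UNIV \<and> (\<forall>n y y'. y \<in> B n \<longrightarrow> y' \<in> B n \<longrightarrow> dist y y' < r)"
proof -
  obtain D :: "'b set" where "countable D" and D: "\<And>X. open X \<Longrightarrow> X \<noteq> {} \<Longrightarrow> \<exists>d\<in>D. d \<in> X"
    by (erule countable_dense_setE)
  have "D \<noteq> {}" using D[of UNIV] by auto
  define e where "e = from_nat_into D"
  have rng: "range e = D" unfolding e_def using \<open>countable D\<close> \<open>D \<noteq> {}\<close> by (simp add: range_from_nat_into)
  define A where "A n = ball (e n) (r/2)" for n
  have cov0: "UNIV \<subseteq> (\<Union>n. A n)"
  proof
    fix y :: 'b
    obtain d where "d \<in> D" "d \<in> ball y (r/2)" using D[of "ball y (r/2)"] r by auto
    then obtain n where "e n = d" using rng by auto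
    then show "y \<in> (\<Union>n. A n)" using \<open>d \<in> ball y (r/2)\<close> by (auto simp: A_def dist_commute)
  qed
  then have cov: "(\<Union>n. A n) = UNIV" by auto
  define B where "B = disjointed A"
  have "range A \<subseteq> sets borel" by (auto simp: A_def)
  then have "range B \<subseteq> sets borel" unfolding B_def by (rule sets.range_disjointed_sets)
  moreover have "disjoint_family B" unfolding B_def by (rule disjoint_family_disjointed)
  moreover have "(\<Union>n. B n) = UNIV" unfolding B_def UN_disjointed_eq cov ..
  moreover have "dist y y' < r" if "y \<in> B n" "y' \<in> B n" for n y y'
  proof -
    have "y \<in> A n" "y' \<in> A n" using that disjointed_subset[of A n] unfolding B_def by auto
    then have "dist (e n) y < r/2" "dist (e n) y' < r/2" by (auto simp: A_def)
    then show ?thesis using dist_triangle3[of y y' "e n"] by linarith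
  qed
  ultimately show ?thesis by blast
qed

context glue begin

lemma gt_fin: "emeasure gt (space gt) \<le> emeasure \<pi>1 (space \<pi>1)"
proof -
  have "emeasure gt (space gt) = (\<integral>\<^sup>+u. (\<lambda>_. 1) (fst u) \<partial>gt)" by simp
  also have "\<dots> \<le> (\<integral>\<^sup>+v. 1 \<partial>\<pi>1)" by (rule TL1) auto
  finally show ?thesis by simp
qed

lemma gt_finite: "finite_measure gt"
  by (rule finite_measureI) (metis fin1 gt_fin infinity_ennreal_def top.extremum_uniqueI)

sublocale G: finite_measure gt by (rule gt_finite)

lemma DTL1:
  assumes H[measurable]: "case_prod H \<in> borel_measurable (\<pi>1 \<Otimes>\<^sub>M \<pi>1)"
  shows "(\<integral>\<^sup>+u. \<integral>\<^sup>+u'. H (fst u) (fst u') \<partial>gt \<partial>gt) \<le> (\<integral>\<^sup>+v. \<integral>\<^sup>+v'. H v v' \<partial>\<pi>1 \<partial>\<pi>1)"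
proof -
  have "(\<integral>\<^sup>+u. \<integral>\<^sup>+u'. H (fst u) (fst u') \<partial>gt \<partial>gt) \<le> (\<integral>\<^sup>+u. (\<lambda>v. \<integral>\<^sup>+v'. H v v' \<partial>\<pi>1) (fst u) \<partial>gt)"
    by (intro nn_integral_mono TL1) (auto simp: sp1)
  also have "\<dots> \<le> (\<integral>\<^sup>+v. \<integral>\<^sup>+v'. H v v' \<partial>\<pi>1 \<partial>\<pi>1)"
    by (rule TL1) measurable
  finally show ?thesis .
qed

lemma DTL2:
  assumes H[measurable]: "case_prod H \<in> borel_measurable (\<pi>2 \<Otimes>\<^sub>M \<pi>2)"
  shows "(\<integral>\<^sup>+u. \<integral>\<^sup>+u'. H (snd u) (snd u') \<partial>gt \<partial>gt) \<le> (\<integral>\<^sup>+v. \<integral>\<^sup>+v'. H v v' \<partial>\<pi>2 \<partial>\<pi>2)"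
proof -
  have "(\<integral>\<^sup>+u. \<integral>\<^sup>+u'. H (snd u) (snd u') \<partial>gt \<partial>gt) \<le> (\<integral>\<^sup>+u. (\<lambda>v. \<integral>\<^sup>+v'. H v v' \<partial>\<pi>2) (snd u) \<partial>gt)"
    by (intro nn_integral_mono TL2) (auto simp: sp2)
  also have "\<dots> \<le> (\<integral>\<^sup>+v. \<integral>\<^sup>+v'. H v v' \<partial>\<pi>2 \<partial>\<pi>2)"
    by (rule TL2) measurable
  finally show ?thesis .
qed

lemma AE_TL1:
  assumes "AE v in \<pi>1. P v"
  shows "AE u in gt. P (fst u)"
proof -
  obtain N where N: "{v \<in> space \<pi>1. \<not> P v} \<subseteq> N" "emeasure \<pi>1 N = 0" "N \<in> sets \<pi>1"
    using assms by (auto elim!: AE_E)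
  have Nm[measurable]: "N \<in> sets \<pi>1" by fact
  have Sm: "{u \<in> space gt. fst u \<in> N} \<in> sets gt"
  proof -
    have "{u \<in> space gt. fst u \<in> N} = fst -` N \<inter> space (\<pi>1 \<Otimes>\<^sub>M \<pi>2)"
      by (auto simp: space_gt space_pair_measure sp1 sp2)
    then show ?thesis unfolding sets_gt using measurable_sets[OF measurable_fst Nm] by simp
  qed
  have "emeasure gt {u \<in> space gt. fst u \<in> N} = (\<integral>\<^sup>+u. indicator {u \<in> space gt. fst u \<in> N} u \<partial>gt)"
    by (rule nn_integral_indicator[symmetric, OF Sm])
  also have "\<dots> = (\<integral>\<^sup>+u. indicator N (fst u) \<partial>gt)"
    by (intro nn_integral_cong) (auto simp: indicator_def)
  also have "\<dots> \<le> (\<integral>\<^sup>+v. indicator N v \<partial>\<pi>1)" by (rule TL1) measurable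
  also have "\<dots> = 0" using N by simp
  finally have "emeasure gt {u \<in> space gt. fst u \<in> N} = 0" by simp
  moreover note Sm
  ultimately show ?thesis
    by (intro AE_I[where N="{u \<in> space gt. fst u \<in> N}"]) (use N in \<open>auto simp: space_gt sp1\<close>)
qed

lemma AE_TL2:
  assumes "AE v in \<pi>2. P v"
  shows "AE u in gt. P (snd u)"
proof -
  obtain N where N: "{v \<in> space \<pi>2. \<not> P v} \<subseteq> N" "emeasure \<pi>2 N = 0" "N \<in> sets \<pi>2"
    using assms by (auto elim!: AE_E)
  have Nm[measurable]: "N \<in> sets \<pi>2" by fact
  have Sm: "{u \<in> space gt. snd u \<in> N} \<in> sets gt"
  proof -
    have "{u \<in> space gt. snd u \<in> N} = snd -` N \<inter> space (\<pi>1 \<Otimes>\<^sub>M \<pi>2)"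
      by (auto simp: space_gt space_pair_measure sp1 sp2)
    then show ?thesis unfolding sets_gt using measurable_sets[OF measurable_snd Nm] by simp
  qed
  have "emeasure gt {u \<in> space gt. snd u \<in> N} = (\<integral>\<^sup>+u. indicator {u \<in> space gt. snd u \<in> N} u \<partial>gt)"
    by (rule nn_integral_indicator[symmetric, OF Sm])
  also have "\<dots> = (\<integral>\<^sup>+u. indicator N (snd u) \<partial>gt)"
    by (intro nn_integral_cong) (auto simp: indicator_def)
  also have "\<dots> \<le> (\<integral>\<^sup>+v. indicator N v \<partial>\<pi>2)" by (rule TL2) measurable
  also have "\<dots> = 0" using N by simp
  finally have "emeasure gt {u \<in> space gt. snd u \<in> N} = 0" by simp
  moreover note Sm
  ultimately show ?thesis
    by (intro AE_I[where N="{u \<in> space gt. snd u \<in> N}"]) (use N in \<open>auto simp: space_gt sp2\<close>)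
qed

end


lemma meas_fst_borel:
  assumes "sets M = sets (borel::('x::second_countable_topology \<times> 'y::second_countable_topology) measure)"
  shows "fst \<in> measurable M borel"
proof -
  have "sets M = sets (borel \<Otimes>\<^sub>M borel :: ('x \<times> 'y) measure)" unfolding assms by (rule sets_borel_prod_eq)
  then have "measurable M (borel :: 'x measure) = measurable (borel \<Otimes>\<^sub>M borel) borel"
    by (rule measurable_cong_sets) simp
  then show ?thesis by (simp add: measurable_fst)
qed

lemma meas_snd_borel:
  assumes "sets M = sets (borel::('x::second_countable_topology \<times> 'y::second_countable_topology) measure)"
  shows "snd \<in> measurable M borel"
proof -
  have "sets M = sets (borel \<Otimes>\<^sub>M borel :: ('x \<times> 'y) measure)" unfolding assms by (rule sets_borel_prod_eq)
  then have "measurable M (borel :: 'y measure) = measurable (borel \<Otimes>\<^sub>M borel) borel"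
    by (rule measurable_cong_sets) simp
  then show ?thesis by (simp add: measurable_snd)
qed

lemma distortion_meas[measurable]:
  fixes f g :: "'m \<Rightarrow> ('x::{second_countable_topology,metric_space} \<times> 'y::{second_countable_topology,metric_space})"
  assumes [measurable]: "f \<in> measurable M borel" "g \<in> measurable M borel"
  shows "(\<lambda>x. distortion (f x) (g x)) \<in> borel_measurable M"
proof -
  note [measurable] = meas_fst_borel[OF refl] meas_snd_borel[OF refl]
  show ?thesis unfolding distortion_def by measurable
qed

lemma distortion_bound:
  assumes "dist y1 y2 < r" "dist y1' y2' < r"
  shows "distortion (x, z) (x', z') \<le> distortion (x, y1) (x', y1') + distortion (y2, z) (y2', z') + 2 * r"
proof -
  have a: "dist y1 y1' \<le> dist y1 y2 + dist y2 y2' + dist y2' y1'"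
    using dist_triangle[of y1 y1' y2] dist_triangle[of y2 y1' y2'] by linarith
  have b: "dist y2 y2' \<le> dist y2 y1 + dist y1 y1' + dist y1' y2'"
    using dist_triangle[of y2 y2' y1] dist_triangle[of y1 y2' y1'] by linarith
  show ?thesis using a b assms by (simp add: distortion_def dist_commute abs_le_iff) linarith
qed



lemma Lp_fin_eq: "p \<noteq> \<infinity> \<Longrightarrow> Lp_distortion p \<pi> =
   NP (enn2real p) (\<integral>\<^sup>+z. \<integral>\<^sup>+z'. ennreal (distortion z z' powr enn2real p) \<partial>\<pi> \<partial>\<pi>)"
  by (simp add: Lp_distortion_def NP_def Let_def)

lemma distortion_bound':
  assumes "dist (snd (fst u)) (fst (snd u)) < r" "dist (snd (fst u')) (fst (snd u')) < r"
  shows "distortion (fst (fst u), snd (snd u)) (fst (fst u'), snd (snd u'))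
     \<le> distortion (fst u) (fst u') + distortion (snd u) (snd u') + 2 * r"
  using distortion_bound[OF assms, of "fst (fst u)" "snd (snd u)" "fst (fst u')" "snd (snd u')"]
  by (cases u; cases u') auto

context glue begin

definition proj :: "(('a \<times> 'b) \<times> ('b \<times> 'c)) \<Rightarrow> ('a \<times> 'c)" where
  "proj u = (fst (fst u), snd (snd u))"

definition gam :: "('a \<times> 'c) measure" where "gam = distr gt borel proj"

lemma fst_gt_meas[measurable]: "fst \<in> measurable gt borel"
proof -
  have "fst \<in> measurable (\<pi>1 \<Otimes>\<^sub>M \<pi>2) \<pi>1" by (rule measurable_fst)
  moreover have "measurable (\<pi>1 \<Otimes>\<^sub>M \<pi>2) \<pi>1 = measurable gt borel"
    by (rule measurable_cong_sets) (auto simp: sets_gt s1)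
  ultimately show ?thesis by simp
qed

lemma snd_gt_meas[measurable]: "snd \<in> measurable gt borel"
proof -
  have "snd \<in> measurable (\<pi>1 \<Otimes>\<^sub>M \<pi>2) \<pi>2" by (rule measurable_snd)
  moreover have "measurable (\<pi>1 \<Otimes>\<^sub>M \<pi>2) \<pi>2 = measurable gt borel"
    by (rule measurable_cong_sets) (auto simp: sets_gt s2)
  ultimately show ?thesis by simp
qed

lemma proj_meas[measurable]: "proj \<in> measurable gt borel"
proof -
  note [measurable] = meas_fst_borel[OF refl] meas_snd_borel[OF refl]
  have "proj \<in> measurable gt (borel \<Otimes>\<^sub>M borel)" unfolding proj_def by measurable
  then show ?thesis by (simp add: borel_prod)
qed

lemma sets_gam: "sets gam = sets borel" by (simp add: gam_def)

lemma gam_finite: "finite_measure gam"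
  unfolding gam_def by (rule finite_measure.finite_measure_distr[OF gt_finite proj_meas])

sublocale GM: finite_measure gam by (rule gam_finite)
sublocale GG: pair_sigma_finite gt gt ..

lemma pair_gam: "gam \<Otimes>\<^sub>M gam = distr (gt \<Otimes>\<^sub>M gt) (borel \<Otimes>\<^sub>M borel) (\<lambda>(u, u'). (proj u, proj u'))"
  unfolding gam_def by (rule pair_measure_distr[OF proj_meas proj_meas]) (fold gam_def, unfold_locales)

lemma AE_cell2: "AE x in gt \<Otimes>\<^sub>M gt. P x"
  if "\<And>u u'. (\<exists>n. snd (fst u) \<in> B n \<and> fst (snd u) \<in> B n) \<Longrightarrow> (\<exists>n. snd (fst u') \<in> B n \<and> fst (snd u') \<in> B n) \<Longrightarrow> P (u, u')"
    and "{x \<in> space (gt \<Otimes>\<^sub>M gt). P x} \<in> sets (gt \<Otimes>\<^sub>M gt)"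
proof (rule GG.AE_pair_measure[OF that(2)])
  show "AE u in gt. AE u' in gt. P (u, u')"
    using AE_cell
  proof eventually_elim
    case (elim u)
    show ?case using AE_cell by eventually_elim (use elim that(1) in blast)
  qed
qed

lemma Lp_finite_glue:
  assumes cell: "\<And>n y y'. y \<in> B n \<Longrightarrow> y' \<in> B n \<Longrightarrow> dist y y' < r"
    and p: "1 \<le> p" "p \<noteq> \<infinity>" and mass: "emeasure gt (space gt) \<le> 1" and r: "r \<ge> 0"
  shows "Lp_distortion p gam \<le> Lp_distortion p \<pi>1 + Lp_distortion p \<pi>2 + ennreal (2*r)"
proof -
  define q where "q = enn2real p"
  have q1: "q \<ge> 1" unfolding q_def using p
    by (metis enn2real_1 enn2real_mono infinity_ennreal_def less_top)
  have q0: "q > 0" using q1 by simp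
  define F where "F x = distortion (fst (fst x)) (fst (snd x))" for x :: "(('a \<times> 'b) \<times> ('b \<times> 'c)) \<times> (('a \<times> 'b) \<times> ('b \<times> 'c))"
  define G where "G x = distortion (snd (fst x)) (snd (snd x))" for x :: "(('a \<times> 'b) \<times> ('b \<times> 'c)) \<times> (('a \<times> 'b) \<times> ('b \<times> 'c))"
  define Dp where "Dp x = distortion (proj (fst x)) (proj (snd x))" for x :: "(('a \<times> 'b) \<times> ('b \<times> 'c)) \<times> (('a \<times> 'b) \<times> ('b \<times> 'c))"
  have [measurable]: "F \<in> borel_measurable (gt \<Otimes>\<^sub>M gt)" "G \<in> borel_measurable (gt \<Otimes>\<^sub>M gt)"
    "Dp \<in> borel_measurable (gt \<Otimes>\<^sub>M gt)"
    unfolding F_def G_def Dp_def by measurable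
  have F0: "F x \<ge> 0" "G x \<ge> 0" "Dp x \<ge> 0" for x by (auto simp: F_def G_def Dp_def distortion_def)
  note [measurable] = meas_fst_borel[OF refl] meas_snd_borel[OF refl]
  have "(\<integral>\<^sup>+z. \<integral>\<^sup>+z'. ennreal (distortion z z' powr q) \<partial>gam \<partial>gam)
      = (\<integral>\<^sup>+x. ennreal (distortion (fst x) (snd x) powr q) \<partial>(gam \<Otimes>\<^sub>M gam))"
  proof -
    have idm: "(\<lambda>z. z) \<in> measurable gam borel" by (simp add: measurable_ident_sets sets_gam)
    have [measurable]: "fst \<in> measurable (gam \<Otimes>\<^sub>M gam) borel" "snd \<in> measurable (gam \<Otimes>\<^sub>M gam) borel"
      using measurable_compose[OF measurable_fst[of gam gam] idm] measurable_compose[OF measurable_snd[of gam gam] idm] by simp_all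
    show ?thesis by (subst GM.nn_integral_fst[symmetric]) auto
  qed
  also have "\<dots> = (\<integral>\<^sup>+x. ennreal (Dp x powr q) \<partial>(gt \<Otimes>\<^sub>M gt))"
    unfolding pair_gam Dp_def by (subst nn_integral_distr) (auto simp: case_prod_beta)
  also have "\<dots> \<le> (\<integral>\<^sup>+x. ennreal ((F x + G x + 2*r) powr q) \<partial>(gt \<Otimes>\<^sub>M gt))"
  proof (rule nn_integral_mono_AE)
    show "AE x in gt \<Otimes>\<^sub>M gt. ennreal (Dp x powr q) \<le> ennreal ((F x + G x + 2*r) powr q)"
    proof (rule AE_cell2)
      fix u u' :: "('a \<times> 'b) \<times> ('b \<times> 'c)"
      assume "\<exists>n. snd (fst u) \<in> B n \<and> fst (snd u) \<in> B n" "\<exists>n. snd (fst u') \<in> B n \<and> fst (snd u') \<in> B n"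
      then have "dist (snd (fst u)) (fst (snd u)) < r" "dist (snd (fst u')) (fst (snd u')) < r"
        using cell by blast+
      from distortion_bound'[OF this]
      have "Dp (u, u') \<le> F (u, u') + G (u, u') + 2*r" by (simp add: Dp_def F_def G_def proj_def)
      then show "ennreal (Dp (u, u') powr q) \<le> ennreal ((F (u, u') + G (u, u') + 2*r) powr q)"
        using F0 q0 by (intro ennreal_leI powr_mono2) auto
    qed measurable
  qed
  finally have step1: "Lp_distortion p gam \<le> NP q (\<integral>\<^sup>+x. ennreal ((F x + G x + 2*r) powr q) \<partial>(gt \<Otimes>\<^sub>M gt))"
    unfolding Lp_fin_eq[OF p(2)] q_def[symmetric] using q0 by (rule NP_mono)
  have step2: "NP q (\<integral>\<^sup>+x. ennreal ((F x + G x + 2*r) powr q) \<partial>(gt \<Otimes>\<^sub>M gt))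
     \<le> NP q (\<integral>\<^sup>+x. ennreal ((F x + G x) powr q) \<partial>(gt \<Otimes>\<^sub>M gt)) + NP q (\<integral>\<^sup>+x. ennreal ((2*r) powr q) \<partial>(gt \<Otimes>\<^sub>M gt))"
    using minkowski[OF q1, of "\<lambda>x. F x + G x" "gt \<Otimes>\<^sub>M gt" "\<lambda>_. 2*r"] F0 r by auto
  have step3: "NP q (\<integral>\<^sup>+x. ennreal ((F x + G x) powr q) \<partial>(gt \<Otimes>\<^sub>M gt))
     \<le> NP q (\<integral>\<^sup>+x. ennreal (F x powr q) \<partial>(gt \<Otimes>\<^sub>M gt)) + NP q (\<integral>\<^sup>+x. ennreal (G x powr q) \<partial>(gt \<Otimes>\<^sub>M gt))"
    using minkowski[OF q1, of F "gt \<Otimes>\<^sub>M gt" G] F0 by auto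
  have step4: "NP q (\<integral>\<^sup>+x. ennreal (F x powr q) \<partial>(gt \<Otimes>\<^sub>M gt)) \<le> Lp_distortion p \<pi>1"
  proof -
    have "(\<integral>\<^sup>+x. ennreal (F x powr q) \<partial>(gt \<Otimes>\<^sub>M gt)) = (\<integral>\<^sup>+u. \<integral>\<^sup>+u'. ennreal (distortion (fst u) (fst u') powr q) \<partial>gt \<partial>gt)"
      unfolding F_def by (subst G.nn_integral_fst[symmetric]) auto
    also have "\<dots> \<le> (\<integral>\<^sup>+v. \<integral>\<^sup>+v'. ennreal (distortion v v' powr q) \<partial>\<pi>1 \<partial>\<pi>1)"
    proof (rule DTL1[where H="\<lambda>v v'. ennreal (distortion v v' powr q)"])
      have idm: "(\<lambda>z. z) \<in> measurable \<pi>1 borel" by (simp add: measurable_ident_sets s1)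
      have [measurable]: "fst \<in> measurable (\<pi>1 \<Otimes>\<^sub>M \<pi>1) borel" "snd \<in> measurable (\<pi>1 \<Otimes>\<^sub>M \<pi>1) borel"
        using measurable_compose[OF measurable_fst[of \<pi>1 \<pi>1] idm] measurable_compose[OF measurable_snd[of \<pi>1 \<pi>1] idm] by simp_all
      show "(\<lambda>(v, v'). ennreal (distortion v v' powr q)) \<in> borel_measurable (\<pi>1 \<Otimes>\<^sub>M \<pi>1)"
        by (simp add: case_prod_beta) measurable
    qed
    finally show ?thesis unfolding Lp_fin_eq[OF p(2)] q_def[symmetric] using q0 by (rule NP_mono)
  qed
  have step5: "NP q (\<integral>\<^sup>+x. ennreal (G x powr q) \<partial>(gt \<Otimes>\<^sub>M gt)) \<le> Lp_distortion p \<pi>2"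
  proof -
    have "(\<integral>\<^sup>+x. ennreal (G x powr q) \<partial>(gt \<Otimes>\<^sub>M gt)) = (\<integral>\<^sup>+u. \<integral>\<^sup>+u'. ennreal (distortion (snd u) (snd u') powr q) \<partial>gt \<partial>gt)"
      unfolding G_def by (subst G.nn_integral_fst[symmetric]) auto
    also have "\<dots> \<le> (\<integral>\<^sup>+v. \<integral>\<^sup>+v'. ennreal (distortion v v' powr q) \<partial>\<pi>2 \<partial>\<pi>2)"
    proof (rule DTL2[where H="\<lambda>v v'. ennreal (distortion v v' powr q)"])
      have idm: "(\<lambda>z. z) \<in> measurable \<pi>2 borel" by (simp add: measurable_ident_sets s2)
      have [measurable]: "fst \<in> measurable (\<pi>2 \<Otimes>\<^sub>M \<pi>2) borel" "snd \<in> measurable (\<pi>2 \<Otimes>\<^sub>M \<pi>2) borel"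
        using measurable_compose[OF measurable_fst[of \<pi>2 \<pi>2] idm] measurable_compose[OF measurable_snd[of \<pi>2 \<pi>2] idm] by simp_all
      show "(\<lambda>(v, v'). ennreal (distortion v v' powr q)) \<in> borel_measurable (\<pi>2 \<Otimes>\<^sub>M \<pi>2)"
        by (simp add: case_prod_beta) measurable
    qed
    finally show ?thesis unfolding Lp_fin_eq[OF p(2)] q_def[symmetric] using q0 by (rule NP_mono)
  qed
  have step6: "NP q (\<integral>\<^sup>+x. ennreal ((2*r) powr q) \<partial>(gt \<Otimes>\<^sub>M gt)) \<le> ennreal (2*r)"
  proof -
    have "emeasure (gt \<Otimes>\<^sub>M gt) (space (gt \<Otimes>\<^sub>M gt)) = emeasure gt (space gt) * emeasure gt (space gt)"
      by (simp add: space_pair_measure G.emeasure_pair_measure_Times)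
    also have "\<dots> \<le> 1 * 1" using mass by (intro mult_mono) auto
    finally have m1: "emeasure (gt \<Otimes>\<^sub>M gt) (space (gt \<Otimes>\<^sub>M gt)) \<le> 1" by simp
    have "(\<integral>\<^sup>+x. ennreal ((2*r) powr q) \<partial>(gt \<Otimes>\<^sub>M gt)) = ennreal ((2*r) powr q) * emeasure (gt \<Otimes>\<^sub>M gt) (space (gt \<Otimes>\<^sub>M gt))"
      by simp
    also have "\<dots> \<le> ennreal ((2*r) powr q) * 1" using m1 by (intro mult_left_mono) auto
    finally have "NP q (\<integral>\<^sup>+x. ennreal ((2*r) powr q) \<partial>(gt \<Otimes>\<^sub>M gt)) \<le> NP q (ennreal ((2*r) powr q))"
      using q0 by (intro NP_mono) auto
    also have "\<dots> = ennreal (2*r)" using q0 r by (intro NP_powr) auto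
    finally show ?thesis .
  qed
  have "Lp_distortion p gam \<le> NP q (\<integral>\<^sup>+x. ennreal (F x powr q) \<partial>(gt \<Otimes>\<^sub>M gt)) + NP q (\<integral>\<^sup>+x. ennreal (G x powr q) \<partial>(gt \<Otimes>\<^sub>M gt))
      + NP q (\<integral>\<^sup>+x. ennreal ((2*r) powr q) \<partial>(gt \<Otimes>\<^sub>M gt))"
    using step1 step2 step3 by (meson add_right_mono order_trans)
  also have "\<dots> \<le> Lp_distortion p \<pi>1 + Lp_distortion p \<pi>2 + ennreal (2*r)"
    using step4 step5 step6 by (intro add_mono) auto
  finally show ?thesis .
qed

lemma Linf_glue:
  assumes cell: "\<And>n y y'. y \<in> B n \<Longrightarrow> y' \<in> B n \<Longrightarrow> dist y y' < r" and r: "r \<ge> 0"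
  shows "Lp_distortion \<infinity> gam \<le> Lp_distortion \<infinity> \<pi>1 + Lp_distortion \<infinity> \<pi>2 + ennreal (2*r)"
proof -
  interpret Q1: pair_sigma_finite \<pi>1 \<pi>1 ..
  interpret Q2: pair_sigma_finite \<pi>2 \<pi>2 ..
  define e1 where "e1 = esssup (\<pi>1 \<Otimes>\<^sub>M \<pi>1) (\<lambda>(z, z'). ennreal (distortion z z'))"
  define e2 where "e2 = esssup (\<pi>2 \<Otimes>\<^sub>M \<pi>2) (\<lambda>(z, z'). ennreal (distortion z z'))"
  have L1: "Lp_distortion \<infinity> \<pi>1 = e1" and L2: "Lp_distortion \<infinity> \<pi>2 = e2"
    by (simp_all add: Lp_distortion_def e1_def e2_def)
  have "AE x in \<pi>1 \<Otimes>\<^sub>M \<pi>1. (\<lambda>(z, z'). ennreal (distortion z z')) x \<le> e1"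
    unfolding e1_def by (rule esssup_AE)
  then have "AE v in \<pi>1. AE v' in \<pi>1. ennreal (distortion v v') \<le> e1"
    by (auto dest: Q1.AE_pair)
  then have "AE u in gt. AE v' in \<pi>1. ennreal (distortion (fst u) v') \<le> e1"
    by (rule AE_TL1[where P="\<lambda>v. AE v' in \<pi>1. ennreal (distortion v v') \<le> e1"])
  then have A1: "AE u in gt. AE u' in gt. ennreal (distortion (fst u) (fst u')) \<le> e1"
    by eventually_elim (rule AE_TL1[where P="\<lambda>v'. ennreal (distortion (fst u) v') \<le> e1" for u])
  have "AE x in \<pi>2 \<Otimes>\<^sub>M \<pi>2. (\<lambda>(z, z'). ennreal (distortion z z')) x \<le> e2"
    unfolding e2_def by (rule esssup_AE)
  then have "AE v in \<pi>2. AE v' in \<pi>2. ennreal (distortion v v') \<le> e2"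
    by (auto dest: Q2.AE_pair)
  then have "AE u in gt. AE v' in \<pi>2. ennreal (distortion (snd u) v') \<le> e2"
    by (rule AE_TL2[where P="\<lambda>v. AE v' in \<pi>2. ennreal (distortion v v') \<le> e2"])
  then have A2: "AE u in gt. AE u' in gt. ennreal (distortion (snd u) (snd u')) \<le> e2"
    by eventually_elim (rule AE_TL2[where P="\<lambda>v'. ennreal (distortion (snd u) v') \<le> e2" for u])
  define Dp where "Dp x = ennreal (distortion (proj (fst x)) (proj (snd x)))" for x :: "(('a \<times> 'b) \<times> ('b \<times> 'c)) \<times> (('a \<times> 'b) \<times> ('b \<times> 'c))"
  have [measurable]: "Dp \<in> borel_measurable (gt \<Otimes>\<^sub>M gt)" unfolding Dp_def by measurable
  have "AE u in gt. AE u' in gt. Dp (u, u') \<le> e1 + e2 + ennreal (2*r)"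
    using A1 A2 AE_cell
  proof eventually_elim
    case (elim u)
    show ?case using elim(1,2) AE_cell
    proof eventually_elim
      case (elim u')
      have "dist (snd (fst u)) (fst (snd u)) < r" "dist (snd (fst u')) (fst (snd u')) < r"
        using cell elim \<open>\<exists>n. snd (fst u) \<in> B n \<and> fst (snd u) \<in> B n\<close> by blast+
      from distortion_bound'[OF this]
      have "Dp (u, u') \<le> ennreal (distortion (fst u) (fst u') + distortion (snd u) (snd u') + 2*r)"
        by (simp add: Dp_def proj_def ennreal_leI)
      also have "\<dots> = ennreal (distortion (fst u) (fst u')) + ennreal (distortion (snd u) (snd u')) + ennreal (2*r)"
        using r by (simp add: ennreal_plus distortion_def)
      also have "\<dots> \<le> e1 + e2 + ennreal (2*r)"
        using elim by (intro add_mono) auto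
      finally show ?case .
    qed
  qed
  then have AEg: "AE x in gt \<Otimes>\<^sub>M gt. Dp x \<le> e1 + e2 + ennreal (2*r)"
    by (intro GG.AE_pair_measure) auto
  have idm: "(\<lambda>z. z) \<in> measurable gam borel" by (simp add: measurable_ident_sets sets_gam)
  have [measurable]: "fst \<in> measurable (gam \<Otimes>\<^sub>M gam) borel" "snd \<in> measurable (gam \<Otimes>\<^sub>M gam) borel"
    using measurable_compose[OF measurable_fst[of gam gam] idm] measurable_compose[OF measurable_snd[of gam gam] idm] by simp_all
  note [measurable] = meas_fst_borel[OF refl] meas_snd_borel[OF refl]
  have "AE x in gam \<Otimes>\<^sub>M gam. (\<lambda>(z, z'). ennreal (distortion z z')) x \<le> e1 + e2 + ennreal (2*r)"
    unfolding pair_gam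
    by (subst AE_distr_iff) (use AEg in \<open>auto simp: Dp_def case_prod_beta\<close>)
  then have "esssup (gam \<Otimes>\<^sub>M gam) (\<lambda>(z, z'). ennreal (distortion z z')) \<le> e1 + e2 + ennreal (2*r)"
    by (intro esssup_I) (auto simp: case_prod_beta)
  then show ?thesis unfolding L1 L2 by (simp add: Lp_distortion_def)
qed

end


lemma glue_exists:
  fixes \<mu>X :: "'a::polish_space measure" and \<mu>Y :: "'b::polish_space measure" and \<mu>Z :: "'c::polish_space measure"
  assumes P1: "\<pi>1 \<in> partial_couplings \<mu>X \<mu>Y s1" and P2: "\<pi>2 \<in> partial_couplings \<mu>Y \<mu>Z s2"
    and Y: "pmm_space \<mu>Y" and s0: "s1 \<ge> 0" "s2 \<ge> 0" and s12: "s1 + s2 \<ge> 1" and r: "r > 0" and p: "p \<ge> 1"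
  shows "\<exists>\<gamma> \<in> partial_couplings \<mu>X \<mu>Z (s1 + s2 - 1).
           Lp_distortion p \<gamma> \<le> Lp_distortion p \<pi>1 + Lp_distortion p \<pi>2 + ennreal (2*r)"
proof -
  interpret MY: prob_space \<mu>Y using Y by (simp add: pmm_space_def)
  have sY: "sets \<mu>Y = sets borel" using Y by (simp add: pmm_space_def)
  have s1: "sets \<pi>1 = sets borel" and mX: "\<And>A. A \<in> sets borel \<Longrightarrow> emeasure (distr \<pi>1 borel fst) A \<le> emeasure \<mu>X A"
    and mY1: "\<And>A. A \<in> sets borel \<Longrightarrow> emeasure (distr \<pi>1 borel snd) A \<le> emeasure \<mu>Y A"
    and M1: "emeasure \<pi>1 (space \<pi>1) = ennreal s1"
    using P1 by (auto simp: partial_couplings_def)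
  have s2: "sets \<pi>2 = sets borel" and mZ: "\<And>A. A \<in> sets borel \<Longrightarrow> emeasure (distr \<pi>2 borel snd) A \<le> emeasure \<mu>Z A"
    and mY2: "\<And>A. A \<in> sets borel \<Longrightarrow> emeasure (distr \<pi>2 borel fst) A \<le> emeasure \<mu>Y A"
    and M2: "emeasure \<pi>2 (space \<pi>2) = ennreal s2"
    using P2 by (auto simp: partial_couplings_def)
  have sp1: "space \<pi>1 = UNIV" using sets_eq_imp_space_eq[OF s1] by simp
  have sp2: "space \<pi>2 = UNIV" using sets_eq_imp_space_eq[OF s2] by simp
  interpret F1: finite_measure \<pi>1 using M1 by (intro finite_measureI) simp
  interpret F2: finite_measure \<pi>2 using M2 by (intro finite_measureI) simp
  obtain B :: "nat \<Rightarrow> 'b set" where Bm: "\<And>n. B n \<in> sets borel" and Bd: "disjoint_family B"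
    and BU: "(\<Union>n. B n) = UNIV" and cell: "\<And>n y y'. y \<in> B n \<Longrightarrow> y' \<in> B n \<Longrightarrow> dist y y' < r"
    using exists_partition[OF r] by blast
  have UB1: "UNIV \<times> B n \<in> sets \<pi>1" for n
    unfolding s1 sets_borel_prod_eq using Bm by (intro pair_measureI) auto
  have UB2: "B n \<times> UNIV \<in> sets \<pi>2" for n
    unfolding s2 sets_borel_prod_eq using Bm by (intro pair_measureI) auto
  define \<nu>1 where "\<nu>1 n = measure \<pi>1 (UNIV \<times> B n)" for n
  define \<nu>2 where "\<nu>2 n = measure \<pi>2 (B n \<times> UNIV)" for n
  define \<mu> where "\<mu> n = measure \<mu>Y (B n)" for n
  have \<nu>0: "\<nu>1 n \<ge> 0" "\<nu>2 n \<ge> 0" for n by (auto simp: \<nu>1_def \<nu>2_def)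
  have sndm: "snd \<in> measurable \<pi>1 borel" by (rule meas_snd_borel[OF s1])
  have fstm: "fst \<in> measurable \<pi>2 borel" by (rule meas_fst_borel[OF s2])
  have \<nu>1le: "\<nu>1 n \<le> \<mu> n" for n
  proof -
    have "emeasure \<pi>1 (UNIV \<times> B n) = emeasure (distr \<pi>1 borel snd) (B n)"
      using Bm sndm by (simp add: emeasure_distr vimage_snd sp1)
    also have "\<dots> \<le> emeasure \<mu>Y (B n)" by (rule mY1[OF Bm])
    finally show ?thesis unfolding \<nu>1_def \<mu>_def
      by (simp add: F1.emeasure_eq_measure MY.emeasure_eq_measure)
  qed
  have \<nu>2le: "\<nu>2 n \<le> \<mu> n" for n
  proof -
    have "emeasure \<pi>2 (B n \<times> UNIV) = emeasure (distr \<pi>2 borel fst) (B n)"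
      using Bm fstm by (simp add: emeasure_distr vimage_fst sp2)
    also have "\<dots> \<le> emeasure \<mu>Y (B n)" by (rule mY2[OF Bm])
    finally show ?thesis unfolding \<nu>2_def \<mu>_def
      by (simp add: F2.emeasure_eq_measure MY.emeasure_eq_measure)
  qed
  have dj1: "disjoint_family (\<lambda>n. UNIV \<times> B n)" using Bd by (auto simp: disjoint_family_on_def)
  have dj2: "disjoint_family (\<lambda>n. B n \<times> UNIV)" using Bd by (auto simp: disjoint_family_on_def)
  have \<nu>1s: "\<nu>1 sums s1"
  proof -
    have "\<nu>1 sums measure \<pi>1 (\<Union>n. UNIV \<times> B n)" unfolding \<nu>1_def
      using UB1 dj1 by (intro F1.finite_measure_UNION) auto
    moreover have "(\<Union>n. UNIV \<times> B n) = space \<pi>1"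
    proof -
      have "(\<Union>n. UNIV \<times> B n) = UNIV \<times> (\<Union>n. B n)" by auto
      then show ?thesis using BU sp1 by simp
    qed
    moreover have "measure \<pi>1 (space \<pi>1) = s1" using M1 s0 by (simp add: F1.emeasure_eq_measure)
    ultimately show ?thesis by simp
  qed
  have \<nu>2s: "\<nu>2 sums s2"
  proof -
    have "\<nu>2 sums measure \<pi>2 (\<Union>n. B n \<times> UNIV)" unfolding \<nu>2_def
      using UB2 dj2 by (intro F2.finite_measure_UNION) auto
    moreover have "(\<Union>n. B n \<times> UNIV) = space \<pi>2"
    proof -
      have "(\<Union>n. B n \<times> UNIV) = (\<Union>n. B n) \<times> UNIV" by auto
      then show ?thesis using BU sp2 by simp
    qed
    moreover have "measure \<pi>2 (space \<pi>2) = s2" using M2 s0 by (simp add: F2.emeasure_eq_measure)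
    ultimately show ?thesis by simp
  qed
  have \<mu>s: "\<mu> sums 1"
  proof -
    have "\<mu> sums measure \<mu>Y (\<Union>n. B n)" unfolding \<mu>_def
      using Bm Bd sY by (intro MY.finite_measure_UNION) auto
    moreover have "(\<Union>n. B n) = space \<mu>Y" using BU sets_eq_imp_space_eq[OF sY] by simp
    ultimately show ?thesis by (simp add: MY.prob_space)
  qed
  have s1le: "s1 \<le> 1" using sums_le[OF \<nu>1le \<nu>1s \<mu>s] .
  have s2le: "s2 \<le> 1" using sums_le[OF \<nu>2le \<nu>2s \<mu>s] .
  define m where "m n = min (\<nu>1 n) (\<nu>2 n)" for n
  have m0: "m n \<ge> 0" for n using \<nu>0 by (simp add: m_def)
  have mge: "m n \<ge> \<nu>1 n + \<nu>2 n - \<mu> n" for n using \<nu>1le[of n] \<nu>2le[of n] by (simp add: m_def)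
  have msum: "summable m"
    by (rule summable_comparison_test[of _ \<nu>1]) (use m0 \<nu>1s in \<open>auto simp: m_def sums_iff\<close>)
  define S where "S = suminf m"
  define T where "T = s1 + s2 - 1"
  have T0: "T \<ge> 0" "T \<le> 1" using s12 s1le s2le by (auto simp: T_def)
  have ST: "T \<le> S"
  proof -
    have "(\<lambda>n. \<nu>1 n + \<nu>2 n - \<mu> n) sums (s1 + s2 - 1)"
      by (intro sums_diff sums_add \<nu>1s \<nu>2s \<mu>s)
    moreover have "m sums S" unfolding S_def using msum by (rule summable_sums)
    ultimately show ?thesis unfolding T_def by (rule sums_le[OF mge])
  qed
  define t where "t = (if S = 0 then 0 else T / S)"
  have t0: "t \<ge> 0" "t \<le> 1" using ST T0 by (auto simp: t_def)
  have tS: "t * S = T" using ST T0 by (auto simp: t_def)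
  define c where "c n = t * m n / (\<nu>1 n * \<nu>2 n)" for n
  have c0: "c n \<ge> 0" for n using t0 m0 \<nu>0 by (simp add: c_def)
  have c1: "c n * \<nu>2 n \<le> 1" for n
  proof (cases "\<nu>1 n = 0 \<or> \<nu>2 n = 0")
    case True then show ?thesis by (auto simp: c_def)
  next
    case False
    then have "c n * \<nu>2 n = t * (m n / \<nu>1 n)" by (simp add: c_def)
    also have "\<dots> \<le> 1 * 1"
    proof (intro mult_mono)
      have "\<nu>1 n > 0" using False \<nu>0[of n] by linarith
      moreover have "m n \<le> \<nu>1 n" by (simp add: m_def)
      ultimately show "m n / \<nu>1 n \<le> 1" by simp
    qed (use t0 m0 \<nu>0 in auto)
    finally show ?thesis by simp
  qed
  have c2: "c n * \<nu>1 n \<le> 1" for n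
  proof (cases "\<nu>1 n = 0 \<or> \<nu>2 n = 0")
    case True then show ?thesis by (auto simp: c_def)
  next
    case False
    then have "c n * \<nu>1 n = t * (m n / \<nu>2 n)" by (simp add: c_def)
    also have "\<dots> \<le> 1 * 1"
    proof (intro mult_mono)
      have "\<nu>2 n > 0" using False \<nu>0[of n] by linarith
      moreover have "m n \<le> \<nu>2 n" by (simp add: m_def)
      ultimately show "m n / \<nu>2 n \<le> 1" by simp
    qed (use t0 m0 \<nu>0 in auto)
    finally show ?thesis by simp
  qed
  have cm: "c n * \<nu>1 n * \<nu>2 n = t * m n" for n
  proof (cases "\<nu>1 n = 0 \<or> \<nu>2 n = 0")
    case True then have "m n = 0" using \<nu>0[of n] by (auto simp: m_def min_def)
    then show ?thesis using True by (auto simp: c_def)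
  qed (simp add: c_def)
  interpret glue \<pi>1 \<pi>2 B c
    using s1 s2 M1 M2 Bm Bd c0 c1 c2 by unfold_locales (auto simp: \<nu>1_def \<nu>2_def)
  have mass: "emeasure gt (space gt) = ennreal T"
  proof -
    have "emeasure gt (space gt) = (\<Sum>n. ennreal (c n * \<nu>1 n * \<nu>2 n))"
      unfolding mass_gt using c0 \<nu>0
      by (simp add: \<nu>1_def \<nu>2_def F1.emeasure_eq_measure F2.emeasure_eq_measure ennreal_mult)
    also have "\<dots> = (\<Sum>n. ennreal (t * m n))" by (simp add: cm)
    also have "\<dots> = ennreal T"
    proof -
      have "m sums S" unfolding S_def using msum by (rule summable_sums)
      then have "(\<lambda>n. t * m n) sums T" using sums_mult[of m S t] tS by simp
      then show ?thesis by (rule suminf_ennreal_eq[rotated]) (use t0 m0 in auto)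
    qed
    finally show ?thesis .
  qed
  have space_gam: "space gam = UNIV" by (simp add: gam_def)
  have "gam \<in> partial_couplings \<mu>X \<mu>Z T"
    unfolding partial_couplings_def
  proof (intro CollectI conjI ballI)
    show "sets gam = sets borel" by (rule sets_gam)
    show "emeasure gam (space gam) = ennreal T"
      unfolding gam_def using mass by (simp add: emeasure_distr space_gt)
  next
    fix A :: "'a set" assume A: "A \<in> sets borel"
    have fg: "fst \<in> measurable gam borel" by (rule meas_fst_borel[OF sets_gam])
    have A1: "A \<times> UNIV \<in> sets \<pi>1" unfolding s1 sets_borel_prod_eq using A by (intro pair_measureI) auto
    have Sm: "{u \<in> space gt. fst (fst u) \<in> A} \<in> sets gt"
    proof -
      have "{u \<in> space gt. fst (fst u) \<in> A} = fst -` (A \<times> UNIV) \<inter> space (\<pi>1 \<Otimes>\<^sub>M \<pi>2)"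
        by (auto simp: space_gt space_pair_measure sp1 sp2)
      then show ?thesis unfolding sets_gt using measurable_sets[OF measurable_fst A1] by simp
    qed
    have "emeasure (distr gam borel fst) A = emeasure gt {u \<in> space gt. fst (fst u) \<in> A}"
      using A fg unfolding gam_def
      by (simp add: emeasure_distr space_gt vimage_def proj_def Int_def)
    also have "\<dots> = (\<integral>\<^sup>+u. indicator {u \<in> space gt. fst (fst u) \<in> A} u \<partial>gt)"
      by (rule nn_integral_indicator[symmetric, OF Sm])
    also have "\<dots> = (\<integral>\<^sup>+u. indicator (A \<times> UNIV) (fst u) \<partial>gt)"
      by (intro nn_integral_cong) (auto simp: indicator_def space_gt)
    also have "\<dots> \<le> (\<integral>\<^sup>+v. indicator (A \<times> UNIV) v \<partial>\<pi>1)"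
      by (rule TL1) (use A1 in auto)
    also have "\<dots> = emeasure \<pi>1 (A \<times> UNIV)" using A1 by simp
    also have "\<dots> = emeasure (distr \<pi>1 borel fst) A"
      using A by (simp add: emeasure_distr meas_fst_borel[OF s1] vimage_fst sp1)
    also have "\<dots> \<le> emeasure \<mu>X A" by (rule mX[OF A])
    finally show "emeasure (distr gam borel fst) A \<le> emeasure \<mu>X A" .
  next
    fix A :: "'c set" assume A: "A \<in> sets borel"
    have sg: "snd \<in> measurable gam borel" by (rule meas_snd_borel[OF sets_gam])
    have A2: "UNIV \<times> A \<in> sets \<pi>2" unfolding s2 sets_borel_prod_eq using A by (intro pair_measureI) auto
    have Sm: "{u \<in> space gt. snd (snd u) \<in> A} \<in> sets gt"
    proof -
      have "{u \<in> space gt. snd (snd u) \<in> A} = snd -` (UNIV \<times> A) \<inter> space (\<pi>1 \<Otimes>\<^sub>M \<pi>2)"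
        by (auto simp: space_gt space_pair_measure sp1 sp2)
      then show ?thesis unfolding sets_gt using measurable_sets[OF measurable_snd A2] by simp
    qed
    have "emeasure (distr gam borel snd) A = emeasure gt {u \<in> space gt. snd (snd u) \<in> A}"
      using A sg unfolding gam_def
      by (simp add: emeasure_distr space_gt vimage_def proj_def Int_def)
    also have "\<dots> = (\<integral>\<^sup>+u. indicator {u \<in> space gt. snd (snd u) \<in> A} u \<partial>gt)"
      by (rule nn_integral_indicator[symmetric, OF Sm])
    also have "\<dots> = (\<integral>\<^sup>+u. indicator (UNIV \<times> A) (snd u) \<partial>gt)"
      by (intro nn_integral_cong) (auto simp: indicator_def space_gt)
    also have "\<dots> \<le> (\<integral>\<^sup>+v. indicator (UNIV \<times> A) v \<partial>\<pi>2)"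
      by (rule TL2) (use A2 in auto)
    also have "\<dots> = emeasure \<pi>2 (UNIV \<times> A)" using A2 by simp
    also have "\<dots> = emeasure (distr \<pi>2 borel snd) A"
      using A by (simp add: emeasure_distr meas_snd_borel[OF s2] vimage_snd sp2)
    also have "\<dots> \<le> emeasure \<mu>Z A" by (rule mZ[OF A])
    finally show "emeasure (distr gam borel snd) A \<le> emeasure \<mu>Z A" .
  qed
  moreover have "Lp_distortion p gam \<le> Lp_distortion p \<pi>1 + Lp_distortion p \<pi>2 + ennreal (2*r)"
  proof (cases "p = \<infinity>")
    case True
    then show ?thesis using Linf_glue[OF cell] r by simp
  next
    case False
    show ?thesis using Lp_finite_glue[OF cell p False] mass T0 r by simp
  qed
  ultimately show ?thesis unfolding T_def by blast
qed



lemma ennreal_le_Inf_add: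
  fixes x :: ennreal
  assumes "\<And>a b. a \<in> A \<Longrightarrow> b \<in> B \<Longrightarrow> x \<le> a + b"
  shows "x \<le> Inf A + Inf B"
proof (rule ennreal_le_epsilon)
  fix e :: real assume e: "0 < e" and fin: "Inf A + Inf B < top"
  have fA: "Inf A \<noteq> top"
  proof
    assume "Inf A = top" with fin show False by simp
  qed
  have fB: "Inf B \<noteq> top"
  proof
    assume "Inf B = top" with fin show False by simp
  qed
  have e2: "(0::ennreal) < ennreal (e/2)" using e by simp
  have "Inf A + 0 < Inf A + ennreal (e/2)" using fA e2 by (simp add: ennreal_add_left_cancel_less)
  then obtain a where a: "a \<in> A" "a < Inf A + ennreal (e/2)" by (auto simp: Inf_less_iff)
  have "Inf B + 0 < Inf B + ennreal (e/2)" using fB e2 by (simp add: ennreal_add_left_cancel_less)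
  then obtain b where b: "b \<in> B" "b < Inf B + ennreal (e/2)" by (auto simp: Inf_less_iff)
  have "x \<le> a + b" using assms a b by blast
  also have "\<dots> \<le> (Inf A + ennreal (e/2)) + (Inf B + ennreal (e/2))"
    using a b by (intro add_mono) auto
  also have "\<dots> = Inf A + Inf B + (ennreal (e/2) + ennreal (e/2))" by (simp add: ac_simps)
  also have "ennreal (e/2) + ennreal (e/2) = ennreal e" using e by (simp add: ennreal_plus[symmetric] del: ennreal_plus)
  finally show "x \<le> Inf A + Inf B + ennreal e" .
qed

lemma null_in_pc:
  fixes \<mu> :: "'a::polish_space measure" and \<nu> :: "'b::polish_space measure"
  shows "null_measure borel \<in> partial_couplings \<mu> \<nu> 0"
proof -
  have "fst \<in> measurable (null_measure borel :: ('a \<times> 'b) measure) borel" by (rule meas_fst_borel) simp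
  moreover have "snd \<in> measurable (null_measure borel :: ('a \<times> 'b) measure) borel" by (rule meas_snd_borel) simp
  ultimately show ?thesis unfolding partial_couplings_def by (auto simp: emeasure_distr)
qed

lemma Lp_null: "Lp_distortion p (null_measure (borel :: ('a::polish_space \<times> 'b::polish_space) measure)) = 0"
proof (cases "p = \<infinity>")
  case True
  let ?N = "null_measure (borel :: ('a \<times> 'b) measure)"
  interpret N: finite_measure ?N by (rule finite_measureI) simp
  interpret NN: pair_sigma_finite ?N ?N ..
  have sN: "sets ?N = sets borel" by simp
  have idm: "(\<lambda>z. z) \<in> measurable ?N borel" by (simp add: measurable_ident_sets)
  have [measurable]: "fst \<in> measurable (?N \<Otimes>\<^sub>M ?N) borel" "snd \<in> measurable (?N \<Otimes>\<^sub>M ?N) borel"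
    using measurable_compose[OF measurable_fst[of ?N ?N] idm] measurable_compose[OF measurable_snd[of ?N ?N] idm] by simp_all
  have "emeasure (?N \<Otimes>\<^sub>M ?N) (space (?N \<Otimes>\<^sub>M ?N)) = 0"
  proof -
    have "emeasure (?N \<Otimes>\<^sub>M ?N) (UNIV \<times> UNIV) = 0" by (subst N.emeasure_pair_measure_Times) auto
    then show ?thesis by (simp add: space_pair_measure)
  qed
  then have nbot: "ae_filter (?N \<Otimes>\<^sub>M ?N) = bot" by (simp only: ae_filter_eq_bot_iff)
  have ae: "AE x in ?N \<Otimes>\<^sub>M ?N. P x" for P unfolding nbot by (rule eventually_bot)
  have "esssup (?N \<Otimes>\<^sub>M ?N) (\<lambda>(z, z'). ennreal (distortion z z')) \<le> 0"
    by (intro esssup_I ae) (auto simp: case_prod_beta)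
  then show ?thesis using True by (simp add: Lp_distortion_def)
qed (simp add: Lp_distortion_def)

lemma mPGW_zero:
  fixes \<mu> :: "'a::polish_space measure" and \<nu> :: "'b::polish_space measure"
  shows "mPGW 0 p \<mu> \<nu> = 0"
proof -
  have "mPGW 0 p \<mu> \<nu> \<le> Lp_distortion p (null_measure borel :: ('a \<times> 'b) measure)"
    unfolding mPGW_def by (rule INF_lower) (rule null_in_pc)
  then show ?thesis by (simp add: Lp_null)
qed

lemma mPGW_triangle:
  fixes \<mu>X :: "'a::polish_space measure" and \<mu>Y :: "'b::polish_space measure" and \<mu>Z :: "'c::polish_space measure"
  assumes Y: "pmm_space \<mu>Y" and d: "0 \<le> d1" "0 \<le> d2" "d1 + d2 \<le> 1" and p: "p \<ge> 1"
  shows "mPGW (1 - (d1 + d2)) p \<mu>X \<mu>Z \<le> mPGW (1 - d1) p \<mu>X \<mu>Y + mPGW (1 - d2) p \<mu>Y \<mu>Z"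
  unfolding mPGW_def
proof (rule ennreal_le_Inf_add)
  fix a b assume a: "a \<in> Lp_distortion p ` partial_couplings \<mu>X \<mu>Y (1 - d1)"
    and b: "b \<in> Lp_distortion p ` partial_couplings \<mu>Y \<mu>Z (1 - d2)"
  then obtain \<pi>1 \<pi>2 where P1: "\<pi>1 \<in> partial_couplings \<mu>X \<mu>Y (1 - d1)" and a': "a = Lp_distortion p \<pi>1"
    and P2: "\<pi>2 \<in> partial_couplings \<mu>Y \<mu>Z (1 - d2)" and b': "b = Lp_distortion p \<pi>2" by auto
  have eq: "(1 - d1) + (1 - d2) - 1 = 1 - (d1 + d2)" by simp
  show "(INF \<gamma>\<in>partial_couplings \<mu>X \<mu>Z (1 - (d1 + d2)). Lp_distortion p \<gamma>) \<le> a + b"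
  proof (rule ennreal_le_epsilon)
    fix e :: real assume e: "0 < e"
    obtain \<gamma> where g: "\<gamma> \<in> partial_couplings \<mu>X \<mu>Z (1 - (d1 + d2))"
      and gl: "Lp_distortion p \<gamma> \<le> Lp_distortion p \<pi>1 + Lp_distortion p \<pi>2 + ennreal (2*(e/2))"
      using glue_exists[OF P1 P2 Y _ _ _ _ p, of "e/2"] d e unfolding eq by auto
    have "(INF \<gamma>\<in>partial_couplings \<mu>X \<mu>Z (1 - (d1 + d2)). Lp_distortion p \<gamma>) \<le> Lp_distortion p \<gamma>"
      by (rule INF_lower[OF g])
    also have "\<dots> \<le> a + b + ennreal e" using gl a' b' by simp
    finally show "(INF \<gamma>\<in>partial_couplings \<mu>X \<mu>Z (1 - (d1 + d2)). Lp_distortion p \<gamma>) \<le> a + b + ennreal e" .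
  qed
qed

theorem theorem4p4:
  fixes \<mu>X :: "'a::polish_space measure"
    and \<mu>Y :: "'b::polish_space measure"
    and \<mu>Z :: "'c::polish_space measure"
    and p :: ennreal and k :: real
  assumes "1 \<le> p" and "0 \<le> k"
    and "pmm_space \<mu>X" and "pmm_space \<mu>Y" and "pmm_space \<mu>Z"
  shows "mPGWk k p \<mu>X \<mu>Z \<le> mPGWk k p \<mu>X \<mu>Y + mPGWk k p \<mu>Y \<mu>Z"
proof -
  define S where "S = (\<lambda>(mu :: 'a measure) (nu :: 'c measure). {\<delta> \<in> {0..1}. mPGW (1 - \<delta>) p mu nu \<le> ennreal (k * \<delta>)})"
  define SXY where "SXY = {\<delta> \<in> {0..1::real}. mPGW (1 - \<delta>) p \<mu>X \<mu>Y \<le> ennreal (k * \<delta>)}"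
  define SYZ where "SYZ = {\<delta> \<in> {0..1::real}. mPGW (1 - \<delta>) p \<mu>Y \<mu>Z \<le> ennreal (k * \<delta>)}"
  define SXZ where "SXZ = {\<delta> \<in> {0..1::real}. mPGW (1 - \<delta>) p \<mu>X \<mu>Z \<le> ennreal (k * \<delta>)}"
  have k: "0 \<le> k" by fact
  have one: "1 \<in> SXY" "1 \<in> SYZ" "1 \<in> SXZ" by (auto simp: SXY_def SYZ_def SXZ_def mPGW_zero)
  have bdd: "bdd_below SXY" "bdd_below SYZ" "bdd_below SXZ"
    by (auto simp: SXY_def SYZ_def SXZ_def bdd_below_def)
  have key: "Inf SXZ \<le> d1 + d2" if d1: "d1 \<in> SXY" and d2: "d2 \<in> SYZ" for d1 d2
  proof (cases "d1 + d2 \<le> 1")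
    case True
    have "mPGW (1 - (d1 + d2)) p \<mu>X \<mu>Z \<le> mPGW (1 - d1) p \<mu>X \<mu>Y + mPGW (1 - d2) p \<mu>Y \<mu>Z"
      using d1 d2 True by (intro mPGW_triangle assms) (auto simp: SXY_def SYZ_def)
    also have "\<dots> \<le> ennreal (k * d1) + ennreal (k * d2)"
      using d1 d2 by (intro add_mono) (auto simp: SXY_def SYZ_def)
    also have "\<dots> = ennreal (k * (d1 + d2))"
      using d1 d2 k by (simp add: SXY_def SYZ_def distrib_left ennreal_plus)
    finally have "d1 + d2 \<in> SXZ" using d1 d2 True by (auto simp: SXZ_def SXY_def SYZ_def)
    then show ?thesis by (rule cInf_lower[OF _ bdd(3)])
  next
    case False
    have "Inf SXZ \<le> 1" by (rule cInf_lower[OF one(3) bdd(3)])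
    then show ?thesis using False by simp
  qed
  have "Inf SXZ - Inf SYZ \<le> Inf SXY"
  proof (rule cInf_greatest)
    show "SXY \<noteq> {}" using one by auto
    fix d1 assume d1: "d1 \<in> SXY"
    have "Inf SXZ - d1 \<le> Inf SYZ"
    proof (rule cInf_greatest)
      show "SYZ \<noteq> {}" using one by auto
      fix d2 assume "d2 \<in> SYZ"
      then show "Inf SXZ - d1 \<le> d2" using key[OF d1] by force
    qed
    then show "Inf SXZ - Inf SYZ \<le> d1" by simp
  qed
  then show ?thesis by (simp add: mPGWk_def SXY_def SYZ_def SXZ_def)
qed


end
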